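(* Let $0<\rho_1<1$. There is $\epsilon_0\in(0,1)$ such that for every $0<\epsilon<\epsilon_0$ there is $q_0$ (depending on $\rho_1$ and $\epsilon$) such that the following holds for every prime $q\ge q_0$. Let $S\subseteq\mathbb{Z}/q\mathbb{Z}$ with $|S|\ge\rho_1 q$, and let $h$ be an integer with $1\le h\le q-1$ such that $S'=\{hs\bmod q : s\in S\}$ satisfies: for every integer $a$ with $|a|\le q/2$ and $|f_{S'}(a/q)|>\epsilon|S|$ one has $|a|<q^{1-\rho_1\epsilon^2}$. Let $k$ be an integer, $v$ an integer with $1\le v<q^{\rho_1\epsilon^2/4}$, and $W=W(k,v)$. Let $u$ be real with $5vq^{-\rho_1\epsilon^2}\le|u|\le\frac12$, and let $a$ be an integer with $|u-a/q|\le \frac{1}{2q}$. Then for all integers $N\ge 0$, $H\ge 1$ with $[N+1,N+H]\subseteq[0,q-1]$, $$\left|\sum_{s\in W,\ N+1\le s\le N+H} e\left(\frac{sa}{q}\right)\right|\ <\ 2|S|\left(\frac{\epsilon H}{\rho_1 q}\right)^{1/3}.$$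
   Context: $e(u)=\exp(2\pi i u)$. For a finite set of integers $T$ (subsets of $\mathbb{Z}/q\mathbb{Z}$ being identified with their least nonnegative residues in $\{0,\dots,q-1\}$), $f_T(t)=\sum_{s\in T}e(st)$. Given $S,h$ as in the claim, an integer $k$ and an integer $v$ with $1\le v<q^{\rho_1\epsilon^2/4}$, $W(k,v)\subseteq\{0,1,\dots,q-1\}$ is the set of least nonnegative residues modulo $q$ of the numbers $(4v)^{-1}hs+k$, $s\in S$, where $(4v)^{-1}$ denotes the inverse of $4v$ modulo $q$. *)

theory Defs
  imports "HOL-Analysis.Analysis" "HOL-Number_Theory.Number_Theory"
begin

definition e :: "real \<Rightarrow> complex" where
  "e u = exp (2 * of_real pi * \<i> * of_real u)"

definition fT :: "int set \<Rightarrow> real \<Rightarrow> complex" where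
  "fT T t = (\<Sum>s\<in>T. e (of_int s * t))"

definition W :: "int \<Rightarrow> int set \<Rightarrow> int \<Rightarrow> int \<Rightarrow> int \<Rightarrow> int set" where
  "W q S h k v = (\<lambda>s. (modular_inverse q (4 * v) * h * s + k) mod q) ` S"

end

theory Submission
  imports Defs
begin


lemma e_alt: "e x = exp (\<i> * complex_of_real (2 * pi * x))"
  unfolding e_def by (rule arg_cong[where f=exp]) (simp add: algebra_simps)

lemma e_add: "e (x + y) = e x * e y"
  unfolding e_def by (simp add: distrib_left exp_add)

lemma e_int: "e (of_int n) = 1"
proof -
  have "\<i> * complex_of_real (2 * pi * of_int n) = \<i> * (of_int n * (of_real pi * 2))"
    by simp
  then show ?thesis unfolding e_alt by (simp only: exp_2pi_1_int)
qed

lemma norm_e [simp]: "cmod (e x) = 1"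
  unfolding e_alt by (rule norm_exp_i_times)

lemma e_nat_mult: "e (of_nat n * x) = e x ^ n"
proof -
  have "\<i> * complex_of_real (2 * pi * (of_nat n * x)) = of_nat n * (\<i> * complex_of_real (2 * pi * x))"
    by simp
  then show ?thesis unfolding e_alt by (simp only: exp_of_nat_mult)
qed

lemma e_minus_one: "cmod (e x - 1) = 2 * \<bar>sin (pi * x)\<bar>"
  unfolding e_alt using dist_exp_i_1[of "2 * pi * x"] by simp

lemma e_neg: "e (- x) = cnj (e x)"
  unfolding e_alt exp_cnj by simp

lemma e_eq_1_iff: "e x = 1 \<longleftrightarrow> x \<in> \<int>"
proof
  assume "e x = 1"
  then obtain n :: int where "Im (2 * of_real pi * \<i> * of_real x) = of_int (2 * n) * pi"
    unfolding e_def exp_eq_1 by blast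
  then have "2 * pi * x = 2 * n * pi" by simp
  then have "x = of_int n" by simp
  then show "x \<in> \<int>" by simp
next
  assume "x \<in> \<int>" then obtain n where "x = of_int n" by (auto elim: Ints_cases)
  then show "e x = 1" by (simp add: e_int)
qed

lemma e_cong:
  fixes q x y :: int
  assumes "q \<noteq> 0" "[x = y] (mod q)"
  shows "e (of_int x / of_int q) = e (of_int y / of_int q)"
proof -
  obtain k where "x = y + q * k" using assms(2) 
    by (metis cong_iff_lin cong_sym)
  then have "of_int x / of_int q = of_int y / of_int q + (of_int k :: real)"
    using assms(1) by (simp add: field_simps)
  then show ?thesis by (simp add: e_add e_int)
qed

lemma sin_lower:
  fixes x :: real
  assumes "0 \<le> x" "x \<le> pi / 2"
  shows "(61/100) * x \<le> sin x"
proof -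
  define y where "y = x / 2"
  have y0: "0 \<le> y" and y1: "y \<le> pi / 4" using assms by (auto simp: y_def)
  have pi4: "pi / 4 \<le> 4/5" using pi_approx by simp
  have "\<bar>sin y - (\<Sum>m<4. sin_coeff m * y ^ m)\<bar> \<le> inverse (fact 4) * \<bar>y\<bar> ^ 4"
    by (rule Maclaurin_sin_bound)
  moreover have "(\<Sum>m<4. sin_coeff m * y ^ m) = y - y^3/6"
    by (simp add: sin_coeff_def lessThan_nat_numeral fact_numeral)
  ultimately have "\<bar>sin y - (y - y^3/6)\<bar> \<le> y^4/24" using y0 by (simp add: fact_numeral)
  then have s1: "sin y \<ge> y - y^3/6 - y^4/24" by arith
  have y8: "y \<le> 4/5" using y1 pi4 by linarith
  have y2: "y^2 \<le> (16/25)" using power_mono[OF y8 y0, of 2] by (simp add: power2_eq_square)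
  have "y^3 = y * y^2" "y^4 = y^2 * y^2" by (simp_all add: power2_eq_square power3_eq_cube power4_eq_xxxx)
  moreover have "y * y^2 \<le> y * (16/25)" using mult_left_mono[OF y2 y0] .
  moreover have "y^2 * y^2 \<le> y * (4/5) * (16/25)"
  proof -
    have "y^2 \<le> y * (4/5)" using mult_left_mono[OF y8 y0] by (simp add: power2_eq_square)
    then show ?thesis using y2 y0 by (intro mult_mono) auto
  qed
  ultimately have sy: "sin y \<ge> (109/125) * y" using s1 by linarith
  have c: "cos y \<ge> sqrt 2 / 2" using cos_mono_le_eq[of "pi/4" y] y0 y1 cos_45 by simp
  have sx: "sin x = 2 * sin y * cos y" using sin_double[of y] by (simp add: y_def)
  have s2: "sqrt 2 \<ge> (141/100)" by (rule real_le_rsqrt) (simp add: power2_eq_square)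
  have "2 * sin y * cos y \<ge> 2 * ((109/125) * y) * (sqrt 2 / 2)"
    using sy c y0 by (intro mult_mono) auto
  moreover have "2 * ((109/125) * y) * (sqrt 2 / 2) \<ge> (61/100) * x"
  proof -
    have "x * (141/100) \<le> x * sqrt 2" using s2 assms(1) by (rule mult_left_mono)
    then show ?thesis using assms(1) by (simp add: y_def)
  qed
  ultimately show ?thesis using sx by linarith
qed

lemma sum_sym_reindex:
  fixes m :: int and g :: "int \<Rightarrow> 'a::comm_monoid_add"
  assumes "m \<ge> 0"
  shows "(\<Sum>r\<in>{-m..m}. g r) = (\<Sum>j<nat (2 * m+1). g (int j - m))"
  by (rule sum.reindex_bij_witness[where j = "\<lambda>r. nat (r + m)" and i = "\<lambda>j. int j - m"])
     (use assms in auto)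

lemma orth:
  fixes m d :: int
  assumes "m \<ge> 0"
  shows "(\<Sum>r\<in>{-m..m}. e (of_int (r * d) / of_int (2 * m+1))) = (if (2 * m+1) dvd d then of_int (2 * m+1) else 0)"
proof (cases "(2 * m+1) dvd d")
  case True
  then obtain n where n: "d = (2 * m+1) * n" by blast
  have "e (of_int (r * d) / of_int (2 * m+1)) = 1" for r
  proof -
    have "of_int (r * d) / of_int (2 * m+1) = (of_int (r * n) :: real)" using assms by (simp add: n field_simps)
    then show ?thesis using e_int[of "r * n"] by simp
  qed
  then show ?thesis using True assms by simp
next
  case False
  define q where "q = 2 * m+1"
  have q0: "q > 0" using assms by (simp add: q_def)
  define z where "z = e (of_int d / of_int q)"
  have z1: "z \<noteq> 1"
  proof
    assume "z = 1"
    then have "of_int d / of_int q \<in> (\<int> :: real set)" unfolding z_def e_eq_1_iff .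
    then obtain n where "of_int d / of_int q = (of_int n :: real)" by (auto elim: Ints_cases)
    then have "d = q * n" using q0 by (simp add: field_simps) (metis of_int_eq_iff of_int_mult)
    then show False using False by (simp add: q_def)
  qed
  have zq: "z ^ nat q = 1"
  proof -
    have "z ^ nat q = e (of_nat (nat q) * (of_int d / of_int q))" unfolding z_def by (rule e_nat_mult[symmetric])
    also have "of_nat (nat q) * (of_int d / of_int q) = (of_int d :: real)" using q0 by simp
    finally show ?thesis by (simp add: e_int)
  qed
  have "(\<Sum>r\<in>{-m..m}. e (of_int (r * d) / of_int q)) = (\<Sum>j<nat q. e (of_int ((int j - m) * d) / of_int q))"
    using sum_sym_reindex[OF assms, of "\<lambda>r. e (of_int (r * d) / of_int (2 * m+1))"] by (simp add: q_def)
  also have "\<dots> = (\<Sum>j<nat q. e (of_int (-m * d) / of_int q) * z ^ j)"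
  proof (rule sum.cong[OF refl])
    fix j assume "j \<in> {..<nat q}"
    have "of_int ((int j - m) * d) / of_int q = of_int (-m * d) / of_int q + of_nat j * (of_int d / of_int q :: real)"
      using q0 by (simp add: field_simps)
    then show "e (of_int ((int j - m) * d) / of_int q) = e (of_int (-m * d) / of_int q) * z ^ j"
      by (simp only: e_add e_nat_mult z_def)
  qed
  also have "\<dots> = e (of_int (-m * d) / of_int q) * (\<Sum>j<nat q. z ^ j)" by (simp add: sum_distrib_left)
  also have "(\<Sum>j<nat q. z ^ j) = 0" using geometric_sum[OF z1, of "nat q"] zq by simp
  finally show ?thesis using False by (simp add: q_def)
qed

lemma dvd_small_eq:
  fixes x y q :: int
  assumes "0 \<le> x" "x < q" "0 \<le> y" "y < q" "q dvd (x - y)"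
  shows "x = y"
  using assms by (metis mod_eq_dvd_iff mod_pos_pos_trivial)

lemma interval_reindex:
  fixes N H :: int and g :: "int \<Rightarrow> 'a::comm_monoid_add"
  assumes "H \<ge> 0"
  shows "(\<Sum>y\<in>{N+1..N+H}. g y) = (\<Sum>j<nat H. g (N + 1 + int j))"
  by (rule sum.reindex_bij_witness[where j = "\<lambda>y. nat (y - N - 1)" and i = "\<lambda>j. N + 1 + int j"])
     (use assms in auto)

lemma dir_triv:
  fixes q N H r :: int
  assumes "H \<ge> 0"
  shows "cmod (\<Sum>y\<in>{N+1..N+H}. e (of_int (- (r * y)) / of_int q)) \<le> of_int H"
proof -
  have "cmod (\<Sum>y\<in>{N+1..N+H}. e (of_int (- (r * y)) / of_int q)) \<le> (\<Sum>y\<in>{N+1..N+H}. cmod (e (of_int (- (r * y)) / of_int q)))"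
    by (rule norm_sum)
  also have "\<dots> = of_int H" using assms by simp
  finally show ?thesis .
qed

lemma dir_bound:
  fixes q N H r :: int
  assumes "H \<ge> 0" "0 < \<bar>r\<bar>" "2 * \<bar>r\<bar> \<le> q"
  shows "cmod (\<Sum>y\<in>{N+1..N+H}. e (of_int (- (r * y)) / of_int q)) \<le> of_int q / ((19/10) * of_int \<bar>r\<bar>)"
proof -
  have q0: "q > 0" using assms by linarith
  define w where "w = e (of_int (-r) / of_int q)"
  have "(\<Sum>y\<in>{N+1..N+H}. e (of_int (- (r * y)) / of_int q)) = (\<Sum>j<nat H. e (of_int (- (r * (N + 1 + int j))) / of_int q))"
    using interval_reindex[OF assms(1), where N=N and g="\<lambda>y. e (of_int (- (r * y)) / of_int q)"] by simp
  also have "\<dots> = (\<Sum>j<nat H. e (of_int (- (r * (N+1))) / of_int q) * w ^ j)"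
  proof (rule sum.cong[OF refl])
    fix j assume "j \<in> {..<nat H}"
    have "of_int (- (r * (N + 1 + int j))) / of_int q = of_int (- (r * (N+1))) / of_int q + of_nat j * (of_int (-r) / of_int q :: real)"
      using q0 by (simp add: field_simps)
    then show "e (of_int (- (r * (N + 1 + int j))) / of_int q) = e (of_int (- (r * (N+1))) / of_int q) * w ^ j"
      by (simp only: e_add e_nat_mult w_def)
  qed
  also have "\<dots> = e (of_int (- (r * (N+1))) / of_int q) * (\<Sum>j<nat H. w ^ j)" by (simp add: sum_distrib_left)
  finally have D: "cmod (\<Sum>y\<in>{N+1..N+H}. e (of_int (- (r * y)) / of_int q)) = cmod (\<Sum>j<nat H. w ^ j)"
    by (simp add: norm_mult)
  have wm: "cmod (w - 1) = 2 * \<bar>sin (pi * (of_int (-r) / of_int q))\<bar>" unfolding w_def by (rule e_minus_one)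
  define t where "t = pi * (of_int \<bar>r\<bar> / of_int q)"
  have t0: "0 \<le> t" using q0 by (simp add: t_def)
  have t1: "t \<le> pi / 2" using q0 assms(3) by (simp add: t_def field_simps)
  have "t \<le> pi" using t1 pi_gt_zero by linarith
  have st: "0 \<le> sin t" using sin_ge_zero[OF t0 \<open>t \<le> pi\<close>] .
  have "\<bar>sin (pi * (of_int (-r) / of_int q))\<bar> = sin t"
  proof (cases "r \<ge> 0")
    case True 
    then have "sin (pi * (of_int (-r) / of_int q)) = - sin t" by (simp add: t_def)
    then show ?thesis using st by simp
  next
    case False
    then have "sin (pi * (of_int (-r) / of_int q)) = sin t" by (simp add: t_def)
    then show ?thesis using st by simp
  qed
  then have wm2: "cmod (w - 1) \<ge> 2 * ((61/100) * t)" using wm sin_lower[OF t0 t1] by simp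
  define zz where "zz = (of_int \<bar>r\<bar> / of_int q :: real)"
  have zz0: "zz \<ge> 0" using q0 by (simp add: zz_def)
  have "t \<ge> (157/50) * zz" unfolding t_def zz_def[symmetric] using pi_approx zz0
    by (intro mult_right_mono) auto
  then have "cmod (w - 1) \<ge> (19/5) * zz" using wm2 zz0 by linarith
  then have wm3: "cmod (w - 1) \<ge> (19/5) * (of_int \<bar>r\<bar> / of_int q)" by (simp add: zz_def)
  have pos: "(19/5) * (of_int \<bar>r\<bar> / of_int q) > (0::real)" using assms q0 by simp
  have w1: "w \<noteq> 1" using wm3 pos by auto
  have "cmod (\<Sum>j<nat H. w ^ j) = cmod (w ^ nat H - 1) / cmod (w - 1)"
    using geometric_sum[OF w1, of "nat H"] by (simp add: norm_divide)
  also have "\<dots> \<le> 2 / cmod (w - 1)"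
  proof (rule divide_right_mono)
    have "cmod (w ^ nat H - 1) \<le> cmod (w ^ nat H) + cmod (1::complex)" by (rule norm_triangle_ineq4)
    also have "\<dots> = 2" by (simp add: w_def norm_power)
    finally show "cmod (w ^ nat H - 1) \<le> 2" .
  qed simp
  also have "\<dots> \<le> 2 / ((19/5) * (of_int \<bar>r\<bar> / of_int q))"
    by (rule frac_le) (use wm3 pos in auto)
  also have "\<dots> = of_int q / ((19/10) * of_int \<bar>r\<bar>)" using q0 assms by (simp add: field_simps)
  finally show ?thesis using D by simp
qed

lemma e_mult: "e x * e y = e (x + y)" by (simp add: e_add)

lemma e_zero [simp]: "e 0 = 1" by (simp add: e_def)

lemma orth':
  fixes m x y :: int
  assumes "m \<ge> 0" "0 \<le> x" "x < 2 * m+1" "0 \<le> y" "y < 2 * m+1"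
  shows "(\<Sum>r\<in>{-m..m}. e (of_int (r * (x-y)) / of_int (2 * m+1))) = (if x = y then of_int (2 * m+1) else 0)"
proof -
  have "(2 * m+1) dvd (x - y) \<longleftrightarrow> x = y" using dvd_small_eq[OF assms(2-5)] by auto
  then show ?thesis using orth[OF assms(1), of "x-y"] by simp
qed

lemma identity:
  fixes m a :: int and W I :: "int set"
  assumes m0: "m \<ge> 0" and W: "W \<subseteq> {0..<2 * m+1}" and I: "I \<subseteq> {0..<2 * m+1}"
  shows "of_int (2 * m+1) * (\<Sum>x\<in>W \<inter> I. e (of_int x * of_int a / of_int (2 * m+1)))
     = (\<Sum>r\<in>{-m..m}. (\<Sum>y\<in>I. e (of_int (- (r * y)) / of_int (2 * m+1))) * (\<Sum>x\<in>W. e (of_int (x * (a+r)) / of_int (2 * m+1))))"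
proof -
  define q where "q = 2 * m+1"
  have q0: "q > 0" using m0 by (simp add: q_def)
  have fW: "finite W" using W finite_subset by blast
  have fI: "finite I" using I finite_subset by blast
  have "(\<Sum>r\<in>{-m..m}. (\<Sum>y\<in>I. e (of_int (- (r * y)) / of_int q)) * (\<Sum>x\<in>W. e (of_int (x * (a+r)) / of_int q)))
      = (\<Sum>r\<in>{-m..m}. \<Sum>y\<in>I. \<Sum>x\<in>W. e (of_int x * of_int a / of_int q) * e (of_int (r * (x-y)) / of_int q))"
  proof (rule sum.cong[OF refl])
    fix r assume "r \<in> {-m..m}"
    have "(\<Sum>y\<in>I. e (of_int (- (r * y)) / of_int q)) * (\<Sum>x\<in>W. e (of_int (x * (a+r)) / of_int q))
        = (\<Sum>y\<in>I. \<Sum>x\<in>W. e (of_int (- (r * y)) / of_int q) * e (of_int (x * (a+r)) / of_int q))"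
      by (rule sum_product)
    also have "\<dots> = (\<Sum>y\<in>I. \<Sum>x\<in>W. e (of_int x * of_int a / of_int q) * e (of_int (r * (x-y)) / of_int q))"
    proof (intro sum.cong refl)
      fix y x
      have "of_int (- (r * y)) / of_int q + of_int (x * (a+r)) / of_int q
          = of_int x * of_int a / of_int q + (of_int (r * (x-y)) / of_int q :: real)"
        using q0 by (simp add: field_simps)
      then show "e (of_int (- (r * y)) / of_int q) * e (of_int (x * (a+r)) / of_int q) = e (of_int x * of_int a / of_int q) * e (of_int (r * (x-y)) / of_int q)"
        by (simp only: e_mult)
    qed
    finally show "(\<Sum>y\<in>I. e (of_int (- (r * y)) / of_int q)) * (\<Sum>x\<in>W. e (of_int (x * (a+r)) / of_int q))
      = (\<Sum>y\<in>I. \<Sum>x\<in>W. e (of_int x * of_int a / of_int q) * e (of_int (r * (x-y)) / of_int q))" .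
  qed
  also have "\<dots> = (\<Sum>y\<in>I. \<Sum>r\<in>{-m..m}. \<Sum>x\<in>W. e (of_int x * of_int a / of_int q) * e (of_int (r * (x-y)) / of_int q))"
    by (rule sum.swap)
  also have "\<dots> = (\<Sum>y\<in>I. \<Sum>x\<in>W. \<Sum>r\<in>{-m..m}. e (of_int x * of_int a / of_int q) * e (of_int (r * (x-y)) / of_int q))"
    by (intro sum.cong refl sum.swap)
  also have "\<dots> = (\<Sum>y\<in>I. \<Sum>x\<in>W. e (of_int x * of_int a / of_int q) * (if x = y then of_int q else 0))"
  proof (intro sum.cong refl)
    fix y x assume y: "y \<in> I" and x: "x \<in> W"
    have "(\<Sum>r\<in>{-m..m}. e (of_int x * of_int a / of_int q) * e (of_int (r * (x-y)) / of_int q))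
       = e (of_int x * of_int a / of_int q) * (\<Sum>r\<in>{-m..m}. e (of_int (r * (x-y)) / of_int q))"
      by (simp add: sum_distrib_left)
    also have "(\<Sum>r\<in>{-m..m}. e (of_int (r * (x-y)) / of_int q)) = (if x = y then of_int q else 0)"
      unfolding q_def by (rule orth'[OF m0]) (use x y W I in auto)
    finally show "(\<Sum>r\<in>{-m..m}. e (of_int x * of_int a / of_int q) * e (of_int (r * (x-y)) / of_int q))
       = e (of_int x * of_int a / of_int q) * (if x = y then of_int q else 0)" .
  qed
  also have "\<dots> = (\<Sum>x\<in>W. \<Sum>y\<in>I. e (of_int x * of_int a / of_int q) * (if x = y then of_int q else 0))"
    by (rule sum.swap)
  also have "\<dots> = (\<Sum>x\<in>W. if x \<in> I then e (of_int x * of_int a / of_int q) * of_int q else 0)"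
  proof (rule sum.cong[OF refl])
    fix x assume "x \<in> W"
    show "(\<Sum>y\<in>I. e (of_int x * of_int a / of_int q) * (if x = y then of_int q else 0)) = (if x \<in> I then e (of_int x * of_int a / of_int q) * of_int q else 0)"
      using fI by (simp add: if_distrib[of "\<lambda>z. _ * z"] sum.delta cong: if_cong)
  qed
  also have "\<dots> = (\<Sum>x\<in>W \<inter> I. e (of_int x * of_int a / of_int q) * of_int q)"
    using fW by (simp add: sum.inter_restrict)
  also have "\<dots> = of_int q * (\<Sum>x\<in>W \<inter> I. e (of_int x * of_int a / of_int q))"
    by (simp add: sum_distrib_left mult.commute)
  finally show ?thesis unfolding q_def by simp
qed

lemma parseval:
  fixes m a :: int and W :: "int set"
  assumes m0: "m \<ge> 0" and W: "W \<subseteq> {0..<2 * m+1}"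
  shows "(\<Sum>r\<in>{-m..m}. (cmod (\<Sum>x\<in>W. e (of_int (x * (a+r)) / of_int (2 * m+1))))^2) = of_int (2 * m+1) * real (card W)"
proof -
  define q where "q = 2 * m+1"
  have q0: "q > 0" using m0 by (simp add: q_def)
  have fW: "finite W" using W finite_subset by blast
  have "complex_of_real (\<Sum>r\<in>{-m..m}. (cmod (\<Sum>x\<in>W. e (of_int (x * (a+r)) / of_int q)))^2)
     = (\<Sum>r\<in>{-m..m}. (\<Sum>x\<in>W. e (of_int (x * (a+r)) / of_int q)) * cnj (\<Sum>x\<in>W. e (of_int (x * (a+r)) / of_int q)))"
    by (simp only: of_real_sum complex_norm_square)
  also have "\<dots> = (\<Sum>r\<in>{-m..m}. \<Sum>x\<in>W. \<Sum>y\<in>W. e (of_int ((x-y) * a) / of_int q) * e (of_int (r * (x-y)) / of_int q))"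
  proof (rule sum.cong[OF refl])
    fix r assume "r \<in> {-m..m}"
    have "(\<Sum>x\<in>W. e (of_int (x * (a+r)) / of_int q)) * cnj (\<Sum>x\<in>W. e (of_int (x * (a+r)) / of_int q))
       = (\<Sum>x\<in>W. e (of_int (x * (a+r)) / of_int q)) * (\<Sum>y\<in>W. e (- (of_int (y * (a+r)) / of_int q)))"
      by (simp add: cnj_sum e_neg)
    also have "\<dots> = (\<Sum>x\<in>W. \<Sum>y\<in>W. e (of_int (x * (a+r)) / of_int q) * e (- (of_int (y * (a+r)) / of_int q)))"
      by (rule sum_product)
    also have "\<dots> = (\<Sum>x\<in>W. \<Sum>y\<in>W. e (of_int ((x-y) * a) / of_int q) * e (of_int (r * (x-y)) / of_int q))"
    proof (intro sum.cong refl)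
      fix x y
      have "of_int (x * (a+r)) / of_int q + - (of_int (y * (a+r)) / of_int q)
          = of_int ((x-y) * a) / of_int q + (of_int (r * (x-y)) / of_int q :: real)"
        using q0 by (simp add: field_simps)
      then show "e (of_int (x * (a+r)) / of_int q) * e (- (of_int (y * (a+r)) / of_int q)) = e (of_int ((x-y) * a) / of_int q) * e (of_int (r * (x-y)) / of_int q)"
        by (simp only: e_mult)
    qed
    finally show "(\<Sum>x\<in>W. e (of_int (x * (a+r)) / of_int q)) * cnj (\<Sum>x\<in>W. e (of_int (x * (a+r)) / of_int q))
       = (\<Sum>x\<in>W. \<Sum>y\<in>W. e (of_int ((x-y) * a) / of_int q) * e (of_int (r * (x-y)) / of_int q))" .
  qed
  also have "\<dots> = (\<Sum>x\<in>W. \<Sum>r\<in>{-m..m}. \<Sum>y\<in>W. e (of_int ((x-y) * a) / of_int q) * e (of_int (r * (x-y)) / of_int q))"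
    by (rule sum.swap)
  also have "\<dots> = (\<Sum>x\<in>W. \<Sum>y\<in>W. \<Sum>r\<in>{-m..m}. e (of_int ((x-y) * a) / of_int q) * e (of_int (r * (x-y)) / of_int q))"
    by (intro sum.cong refl sum.swap)
  also have "\<dots> = (\<Sum>x\<in>W. \<Sum>y\<in>W. e (of_int ((x-y) * a) / of_int q) * (if x = y then of_int q else 0))"
  proof (intro sum.cong refl)
    fix y x assume y: "y \<in> W" and x: "x \<in> W"
    have "(\<Sum>r\<in>{-m..m}. e (of_int ((x-y) * a) / of_int q) * e (of_int (r * (x-y)) / of_int q))
       = e (of_int ((x-y) * a) / of_int q) * (\<Sum>r\<in>{-m..m}. e (of_int (r * (x-y)) / of_int q))"
      by (simp add: sum_distrib_left)
    also have "(\<Sum>r\<in>{-m..m}. e (of_int (r * (x-y)) / of_int q)) = (if x = y then of_int q else 0)"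
      unfolding q_def by (rule orth'[OF m0]) (use x y W in auto)
    finally show "(\<Sum>r\<in>{-m..m}. e (of_int ((x-y) * a) / of_int q) * e (of_int (r * (x-y)) / of_int q))
       = e (of_int ((x-y) * a) / of_int q) * (if x = y then of_int q else 0)" .
  qed
  also have "\<dots> = (\<Sum>x\<in>W. of_int q)"
  proof (rule sum.cong[OF refl])
    fix x assume "x \<in> W"
    show "(\<Sum>y\<in>W. e (of_int ((x-y) * a) / of_int q) * (if x = y then of_int q else 0)) = of_int q"
      using fW \<open>x \<in> W\<close> by (simp add: if_distrib[of "\<lambda>z. _ * z"] sum.delta e_int cong: if_cong)
  qed
  also have "\<dots> = complex_of_real (of_int q * real (card W))" by simp
  finally show ?thesis unfolding q_def of_real_eq_iff .
qed

lemma inj_affine_mod: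
  fixes q u0 k :: int
  assumes "prime q" "\<not> q dvd u0" "S \<subseteq> {0..<q}"
  shows "inj_on (\<lambda>s. (u0 * s + k) mod q) S"
proof (rule inj_onI)
  fix x y assume x: "x \<in> S" and y: "y \<in> S" and eq: "(u0 * x + k) mod q = (u0 * y + k) mod q"
  then have "q dvd (u0 * x + k) - (u0 * y + k)" by (simp add: mod_eq_dvd_iff)
  then have "q dvd u0 * (x - y)" by (simp add: algebra_simps)
  then have "q dvd (x - y)" using assms(1,2) by (simp add: prime_dvd_mult_iff)
  moreover have "x \<in> {0..<q}" "y \<in> {0..<q}" using x y assms(3) by auto
  ultimately show "x = y" using dvd_small_eq[of x q y] by simp
qed

lemma large_coeff:
  fixes q h k v t :: int and S :: "int set" and \<epsilon> Q :: real
  assumes q: "prime q" "q \<ge> 5" and S: "S \<subseteq> {0..<q}" and h: "1 \<le> h" "h \<le> q - 1"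
    and v: "1 \<le> v" "v < q"
    and hyp: "\<forall>b::int. \<bar>real_of_int b\<bar> \<le> real_of_int q / 2 \<and>
              cmod (fT ((\<lambda>s. (h * s) mod q) ` S) (of_int b / of_int q)) > \<epsilon> * real (card S)
              \<longrightarrow> \<bar>of_int b\<bar> < Q"
    and big: "cmod (\<Sum>x\<in>W q S h k v. e (of_int (x * t) / of_int q)) > \<epsilon> * real (card S)"
  shows "\<exists>b::int. \<bar>of_int b\<bar> < Q \<and> q dvd (t - 4 * v * b)"
proof -
  define c where "c = modular_inverse q (4 * v)"
  have q0: "q > 0" using q by simp
  have n4: "\<not> q dvd 4" using q by (auto dest: zdvd_imp_le)
  have nv: "\<not> q dvd v" using v by (auto dest: zdvd_imp_le)
  have n4v: "\<not> q dvd (4 * v)" using q(1) n4 nv by (simp add: prime_dvd_mult_iff)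
  have cop: "coprime (4 * v) q" using q(1) n4v
    by (metis coprime_commute prime_imp_coprime)
  have inv: "[4 * v * c = 1] (mod q)" unfolding c_def by (rule cong_modular_inverse1[OF cop])
  have nc: "\<not> q dvd c"
  proof
    assume "q dvd c"
    then have "q dvd 4 * v * c" by simp
    then have "q dvd 1" using inv by (metis cong_dvd_iff)
    then show False using q by simp
  qed
  have nh: "\<not> q dvd h" using h by (auto dest: zdvd_imp_le)
  have nch: "\<not> q dvd (c * h)" using q(1) nc nh by (simp add: prime_dvd_mult_iff)
  define g where "g = (\<lambda>s. (c * h * s + k) mod q)"
  have Weq: "W q S h k v = g ` S" unfolding W_def g_def c_def by simp
  have injg: "inj_on g S" unfolding g_def using inj_affine_mod[OF q(1) nch S] by simp
  have injh: "inj_on (\<lambda>s. (h * s) mod q) S" using inj_affine_mod[OF q(1) nh S, of 0] by simp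
  define b0 where "b0 = (c * t) mod q"
  define b where "b = (if 2 * b0 \<le> q then b0 else b0 - q)"
  have b0r: "0 \<le> b0" "b0 < q" using q0 by (simp_all add: b0_def)
  have bq: "\<bar>real_of_int b\<bar> \<le> real_of_int q / 2" using b0r by (simp add: b_def)
  have bc: "[b = c * t] (mod q)" by (simp add: b_def b0_def cong_def)
  have "(\<Sum>x\<in>W q S h k v. e (of_int (x * t) / of_int q)) = (\<Sum>s\<in>S. e (of_int (g s * t) / of_int q))"
    unfolding Weq by (simp add: sum.reindex[OF injg])
  also have "\<dots> = (\<Sum>s\<in>S. e (of_int (k * t) / of_int q) * e (of_int (((h * s) mod q) * b) / of_int q))"
  proof (rule sum.cong[OF refl])
    fix s assume "s \<in> S"
    have c1: "[g s * t = (k * t) + ((h * s) mod q) * b] (mod q)"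
    proof -
      have "[g s * t = (c * h * s + k) * t] (mod q)" unfolding g_def by (simp add: cong_def mod_mult_left_eq)
      moreover have "[(c * h * s + k) * t = k * t + (h * s) * (c * t)] (mod q)" by (simp add: algebra_simps)
      moreover have "[(h * s) * (c * t) = ((h * s) mod q) * b] (mod q)"
        using bc by (intro cong_mult) (simp_all add: cong_def cong_sym)
      ultimately show ?thesis by (meson cong_add cong_refl cong_trans)
    qed
    have "e (of_int (g s * t) / of_int q) = e (of_int (k * t + ((h * s) mod q) * b) / of_int q)"
      using e_cong[OF _ c1] q0 by simp
    also have "\<dots> = e (of_int (k * t) / of_int q + of_int (((h * s) mod q) * b) / of_int q)"
      by (simp add: add_divide_distrib)
    finally show "e (of_int (g s * t) / of_int q) = e (of_int (k * t) / of_int q) * e (of_int (((h * s) mod q) * b) / of_int q)"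
      by (simp add: e_add)
  qed
  also have "\<dots> = e (of_int (k * t) / of_int q) * fT ((\<lambda>s. (h * s) mod q) ` S) (of_int b / of_int q)"
    unfolding fT_def by (simp add: sum.reindex[OF injh] sum_distrib_left)
  finally have "cmod (\<Sum>x\<in>W q S h k v. e (of_int (x * t) / of_int q)) = cmod (fT ((\<lambda>s. (h * s) mod q) ` S) (of_int b / of_int q))"
    by (simp add: norm_mult)
  then have "\<bar>of_int b\<bar> < Q" using hyp bq big by auto
  moreover have "q dvd (t - 4 * v * b)"
  proof -
    have "[4 * v * b = 4 * v * (c * t)] (mod q)" using bc by (simp add: cong_scalar_left)
    moreover have "[4 * v * (c * t) = (4 * v * c) * t] (mod q)" by (simp add: algebra_simps)
    moreover have "[(4 * v * c) * t = 1 * t] (mod q)" using cong_mult[OF inv cong_refl[of t]] by simp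
    ultimately have "[4 * v * b = t] (mod q)" by (metis cong_trans mult_1)
    from cong_sym[OF this] show ?thesis by (simp add: cong_iff_dvd_diff)
  qed
  ultimately show ?thesis by blast
qed

lemma inv_sq_tail_nat:
  fixes R M :: nat
  assumes "R \<ge> 1" "R \<le> M"
  shows "(\<Sum>j\<in>{R+1..M}. 1 / (real j)^2) \<le> 1 / real R - 1 / real M"
  using assms(2)
proof (induction M rule: dec_induct)
  case base
  then show ?case by simp
next
  case (step n)
  have n1: "real n \<ge> 1" using step assms by simp
  have "(\<Sum>j\<in>{R+1..Suc n}. 1 / (real j)^2) = (\<Sum>j\<in>{R+1..n}. 1 / (real j)^2) + 1 / (real (Suc n))^2"
    using step by (simp add: sum.cl_ivl_Suc)
  also have "\<dots> \<le> 1 / real R - 1 / real n + 1 / (1 + real n)^2" using step by simp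
  also have "1 / (1 + real n)^2 \<le> 1 / (real n * (1 + real n))"
    by (rule frac_le) (use n1 in \<open>auto simp: power2_eq_square intro: mult_right_mono\<close>)
  also have "\<dots> = 1 / real n - 1 / (1 + real n)"
    using n1 by (simp add: field_simps)
  finally show ?case by simp
qed

lemma inv_sq_tail_nat':
  fixes R M :: nat
  assumes "R \<ge> 1"
  shows "(\<Sum>j\<in>{R+1..M}. 1 / (real j)^2) \<le> 1 / real R"
proof (cases "R \<le> M")
  case True
  then show ?thesis using inv_sq_tail_nat[OF assms True] by (smt (verit) of_nat_0_le_iff divide_nonneg_nonneg)
next
  case False
  then show ?thesis using assms by simp
qed

lemma inv_sq_tail:
  fixes m :: int and R :: nat
  assumes "R \<ge> 1"
  shows "(\<Sum>r\<in>{r\<in>{-m..m}. int R < \<bar>r\<bar>}. 1 / (of_int r)^2) \<le> 2 / real R"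
proof -
  have split: "{r\<in>{-m..m}. int R < \<bar>r\<bar>} = {r\<in>{-m..m}. int R < r} \<union> {r\<in>{-m..m}. r < - int R}" by auto
  have p: "(\<Sum>r\<in>{r\<in>{-m..m}. int R < r}. 1 / (of_int r)^2) = (\<Sum>j\<in>{R+1..nat m}. 1 / (real j)^2 :: real)"
    by (rule sum.reindex_bij_witness[where j = "\<lambda>r. nat r" and i = "\<lambda>j. int j"]) auto
  have n: "(\<Sum>r\<in>{r\<in>{-m..m}. r < - int R}. 1 / (of_int r)^2) = (\<Sum>j\<in>{R+1..nat m}. 1 / (real j)^2 :: real)"
    by (rule sum.reindex_bij_witness[where j = "\<lambda>r. nat (- r)" and i = "\<lambda>j. - int j"]) auto
  have "(\<Sum>r\<in>{r\<in>{-m..m}. int R < \<bar>r\<bar>}. 1 / (of_int r)^2) 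
     = (\<Sum>r\<in>{r\<in>{-m..m}. int R < r}. 1 / (of_int r)^2) + (\<Sum>r\<in>{r\<in>{-m..m}. r < - int R}. 1 / (of_int r)^2 :: real)"
    unfolding split by (rule sum.union_disjoint) (auto intro: finite_subset[where B="{-m..m}"])
  also have "\<dots> \<le> 1 / real R + 1 / real R" unfolding p n using inv_sq_tail_nat'[OF assms, of "nat m"] by linarith
  finally show ?thesis by simp
qed

lemma cs_sqrt:
  fixes a b :: "'a \<Rightarrow> real"
  assumes "\<And>i. i \<in> I \<Longrightarrow> a i \<ge> 0" "\<And>i. i \<in> I \<Longrightarrow> b i \<ge> 0"
  shows "(\<Sum>i\<in>I. a i * b i) \<le> sqrt (\<Sum>i\<in>I. (a i)^2) * sqrt (\<Sum>i\<in>I. (b i)^2)"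
proof -
  have "(\<Sum>i\<in>I. a i * b i)^2 \<le> (\<Sum>i\<in>I. (a i)^2) * (\<Sum>i\<in>I. (b i)^2)" by (rule Cauchy_Schwarz_ineq_sum)
  then have "(\<Sum>i\<in>I. a i * b i) \<le> sqrt ((\<Sum>i\<in>I. (a i)^2) * (\<Sum>i\<in>I. (b i)^2))"
    by (rule real_le_rsqrt)
  then show ?thesis by (simp add: real_sqrt_mult)
qed

lemma final_arith:
  fixes \<rho> \<sigma> q lam R H \<epsilon> X Y :: real
  assumes rho: "\<rho> > 0" and sig: "\<sigma> \<ge> \<rho> * q" and q: "q > 0" and lampos: "lam > 0" and lam1: "lam < 1/20"
    and HE: "H * \<epsilon> = \<rho> * q * lam^3" and R1: "R \<ge> 1 / (3 * \<rho> * lam^2)" and R2: "R \<le> 1 / (3 * \<rho> * lam^2) + 1"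
    and X: "X \<le> (2 * R + 1) * H * \<epsilon> * \<sigma>" and Y: "Y \<le> sqrt (2 * q^2 / ((361/100) * R)) * sqrt (q * \<sigma>)"
    and rle: "\<rho> < 1"
  shows "(X + Y) / q < 2 * \<sigma> * lam"
proof -
  have s0: "\<sigma> > 0" using sig rho q by (smt (verit) mult_pos_pos)
  have Rpos: "R > 0" using R1 rho lampos by (smt (verit) divide_pos_pos mult_pos_pos zero_less_power)
  have "X / q \<le> (2 * R + 1) * (\<rho> * lam^3) * \<sigma>"
    using X q HE by (simp add: divide_simps mult.assoc) (simp add: algebra_simps)
  also have "\<dots> \<le> (2 / (3 * \<rho> * lam^2) + 3) * (\<rho> * lam^3) * \<sigma>"
    using R2 rho lampos s0 by (intro mult_right_mono) auto
  also have "\<dots> = (2/3 * lam + 3 * \<rho> * lam^3) * \<sigma>"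
    using rho lampos by (simp add: field_simps power2_eq_square power3_eq_cube)
  finally have Xb: "X / q \<le> (2/3 * lam + 3 * \<rho> * lam^3) * \<sigma>" .
  have "Y / q \<le> sqrt (2 * q^2 / ((361/100) * R)) * sqrt (q * \<sigma>) / q"
    using Y q by (simp add: divide_right_mono)
  also have "\<dots> = sqrt (2 * q * \<sigma> / ((361/100) * R))"
  proof -
    define Z where "Z = 2 * q * \<sigma> / ((361/100) * R)"
    have "sqrt (2 * q^2 / ((361/100) * R)) * sqrt (q * \<sigma>) = sqrt (2 * q^2 / ((361/100) * R) * (q * \<sigma>))"
      by (rule real_sqrt_mult[symmetric])
    also have "2 * q^2 / ((361/100) * R) * (q * \<sigma>) = q^2 * Z" unfolding Z_def by (simp add: field_simps power2_eq_square)
    also have "sqrt (q^2 * Z) = q * sqrt Z" using q by (simp add: real_sqrt_mult)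
    finally show ?thesis using q unfolding Z_def by simp
  qed
  also have "\<dots> \<le> sqrt ((129/100 * lam * \<sigma>)^2)"
  proof (rule real_sqrt_le_mono)
    have "2 * q * \<sigma> / ((361/100) * R) \<le> 2 * q * \<sigma> / ((361/100) * (1 / (3 * \<rho> * lam^2)))"
      using R1 Rpos q s0 rho lampos by (intro divide_left_mono) (auto intro!: mult_pos_pos)
    also have "\<dots> = (600/361) * lam^2 * \<sigma> * (\<rho> * q)" using rho lampos by (simp add: field_simps)
    also have "\<dots> \<le> (600/361) * lam^2 * \<sigma> * \<sigma>" using sig s0 lampos by (intro mult_left_mono) auto
    also have "\<dots> \<le> (129/100 * lam * \<sigma>)^2" using s0 lampos by (simp add: power2_eq_square algebra_simps)
    finally show "2 * q * \<sigma> / ((361/100) * R) \<le> (129/100 * lam * \<sigma>)^2" .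
  qed
  also have "\<dots> = 129/100 * lam * \<sigma>" using lampos s0 by simp
  finally have Yb: "Y / q \<le> 129/100 * lam * \<sigma>" .
  have "lam^2 \<le> (1/20)^2" using lam1 lampos by (intro power_mono) auto
  then have lam2: "lam^2 \<le> 1/400" by (simp add: power2_eq_square)
  have "\<rho> * lam^2 \<le> 1 * (1/400)" using rle lam2 rho by (intro mult_mono) auto
  then have "(\<rho> * lam^2) * lam \<le> (1/400) * lam" using lampos by (intro mult_right_mono) auto
  then have "3 * \<rho> * lam^3 \<le> 3/400 * lam" by (simp add: power2_eq_square power3_eq_cube algebra_simps)
  then have e2: "(3 * \<rho> * lam^3) * \<sigma> \<le> 3/400 * (lam * \<sigma>)" using s0 by (simp add: mult_right_mono)
  have e1: "X / q \<le> 2/3 * (lam * \<sigma>) + (3 * \<rho> * lam^3) * \<sigma>" using Xb by (simp add: algebra_simps)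
  have e3: "Y / q \<le> 129/100 * (lam * \<sigma>)" using Yb by (simp add: algebra_simps)
  have "lam * \<sigma> > 0" using lampos s0 by simp
  then have "X / q + Y / q < 2 * \<sigma> * lam" using e1 e2 e3 by (simp add: algebra_simps)
  then show ?thesis by (simp add: add_divide_distrib)
qed



lemma main_core:
  fixes \<rho> \<epsilon> u :: real and q h k v a N H :: int and S :: "int set"
  assumes rho: "0 < \<rho>" "\<rho> < 1" and eps: "0 < \<epsilon>" "\<epsilon> < \<rho> / 10000"
    and q: "prime q" "q \<ge> 5"
    and qK: "real_of_int q powr (3 * (\<rho> * \<epsilon>\<^sup>2) / 4) \<ge> 20 + 4 * (1 / (6 * \<rho> * \<epsilon>) + 1)"
    and S: "S \<subseteq> {0..<q}" and card: "real (card S) \<ge> \<rho> * of_int q"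
    and h: "1 \<le> h" "h \<le> q - 1"
    and hyp: "\<forall>b::int. \<bar>real_of_int b\<bar> \<le> real_of_int q / 2 \<and>
              cmod (fT ((\<lambda>s. (h * s) mod q) ` S) (of_int b / of_int q)) > \<epsilon> * real (card S)
              \<longrightarrow> \<bar>of_int b\<bar> < (of_int q) powr (1 - \<rho> * \<epsilon>\<^sup>2)"
    and v: "1 \<le> v" "of_int v < (of_int q) powr (\<rho> * \<epsilon>\<^sup>2 / 4)"
    and u: "5 * of_int v * (of_int q) powr (- \<rho> * \<epsilon>\<^sup>2) \<le> \<bar>u::real\<bar>" "\<bar>u\<bar> \<le> 1/2"
           "\<bar>u - of_int a / of_int q\<bar> \<le> 1 / (2 * of_int q)"
    and NH: "0 \<le> N" "1 \<le> H" "N + H \<le> q - 1"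
  shows "cmod (\<Sum>s\<in>{s\<in>W q S h k v. N + 1 \<le> s \<and> s \<le> N + H}.
                    e (of_int s * of_int a / of_int q))
             < 2 * real (card S) * (\<epsilon> * of_int H / (\<rho> * of_int q)) powr (1/3)"
proof -
  define c where "c = \<rho> * \<epsilon>\<^sup>2"
  define Q where "Q = real_of_int q powr (1 - c)"
  define C0 where "C0 = 1 / (6 * \<rho> * \<epsilon>) + 1"
  define K where "K = 20 + 4 * C0"
  define P where "P = real_of_int q powr (3 * c / 4)"
  define V where "V = real_of_int q powr (c / 4)"
  define \<sigma> where "\<sigma> = real (card S)"
  define WW where "WW = W q S h k v"
  have q0: "q > 0" and qr: "real_of_int q \<ge> 5" using q by auto
  have eps1: "\<epsilon> < 1" using eps rho by simp
  have c0: "c > 0" using rho eps by (simp add: c_def)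
  have e2: "\<epsilon> * \<epsilon> \<le> \<epsilon> * 1" using eps eps1 by (intro mult_left_mono) auto
  have "\<epsilon>\<^sup>2 < 1/2" unfolding power2_eq_square using e2 eps rho by linarith
  moreover have "c \<le> 1 * \<epsilon>\<^sup>2" unfolding c_def using rho by (intro mult_right_mono) auto
  ultimately have c1: "c < 1/2" by simp
  have "0 < 1 / (6 * \<rho> * \<epsilon>)" using rho eps by simp
  then have C0pos: "C0 > 0" unfolding C0_def by linarith
  have PK: "P \<ge> K" using qK by (simp add: P_def K_def C0_def c_def)
  have QP: "Q \<ge> P" unfolding Q_def P_def using c1 qr by (intro powr_mono) auto
  have Pq: "P \<le> real_of_int q"
  proof -
    have "P \<le> real_of_int q powr 1" unfolding P_def using c1 qr by (intro powr_mono) auto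
    then show ?thesis using q0 by simp
  qed
  have Ppos: "P > 0" using q0 by (simp add: P_def)
  have VQ: "V * Q * P = real_of_int q"
  proof -
    have "V * Q * P = real_of_int q powr (c/4 + (1 - c) + 3 * c / 4)" 
      unfolding V_def Q_def P_def powr_add by (rule refl)
    also have "c/4 + (1 - c) + 3 * c / 4 = 1" by simp
    finally show ?thesis using q0 by simp
  qed
  have Qpos: "Q > 0" using q0 by (simp add: Q_def)
  have vV: "real_of_int v < V" using v by (simp add: V_def c_def)
  have VQ5: "4 * real_of_int v * Q < real_of_int q / 5"
  proof -
    have "real_of_int v * Q < V * Q" using vV Qpos by simp
    moreover have "V * Q = real_of_int q / P" using VQ Ppos by (simp add: field_simps)
    moreover have "P \<ge> 20" using PK C0pos unfolding K_def by linarith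
    then have "real_of_int q / P \<le> real_of_int q / 20" using q0 by (intro divide_left_mono) auto
    ultimately show ?thesis by linarith
  qed
  have vq: "v < q"
  proof -
    have "V \<le> real_of_int q powr 1" unfolding V_def using c1 qr by (intro powr_mono) auto
    then show ?thesis using vV q0 by simp
  qed
  have KC: "C0 + 1/2 < K / 4" by (simp add: K_def)
  have a1: "\<bar>real_of_int a\<bar> \<le> real_of_int q / 2 + 1/2"
  proof -
    have "\<bar>real_of_int a / real_of_int q\<bar> \<le> 1/2 + 1 / (2 * real_of_int q)" using u by linarith
    then have "\<bar>real_of_int a\<bar> / real_of_int q \<le> 1/2 + 1 / (2 * real_of_int q)" using q0 by simp
    then show ?thesis using q0 by (simp add: field_simps)
  qed
  have a2: "\<bar>real_of_int a\<bar> \<ge> 5 * real_of_int v * Q - 1/2"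
  proof -
    have "\<bar>real_of_int a / real_of_int q\<bar> \<ge> 5 * of_int v * (of_int q) powr (- \<rho> * \<epsilon>\<^sup>2) - 1 / (2 * real_of_int q)"
      using u by linarith
    then have "\<bar>real_of_int a\<bar> \<ge> (5 * of_int v * (of_int q) powr (- c) - 1 / (2 * real_of_int q)) * real_of_int q"
      using q0 by (simp add: c_def field_simps)
    also have "(5 * of_int v * (of_int q) powr (- c) - 1 / (2 * real_of_int q)) * real_of_int q
        = 5 * of_int v * ((of_int q) powr (- c) * real_of_int q powr 1) - 1/2"
      using q0 by (simp add: field_simps)
    also have "(of_int q) powr (- c) * real_of_int q powr 1 = Q" unfolding Q_def using powr_add[of "real_of_int q" "-c" 1] by simp
    finally show ?thesis .
  qed
  have "odd q" using prime_odd_int[OF q(1)] q by simp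
  then obtain m where qm: "q = 2 * m + 1" by (metis oddE)
  have m0: "m \<ge> 0" using q qm by simp
  have fS: "finite S" using S finite_subset by blast
  have Wsub: "WW \<subseteq> {0..<2 * m + 1}"
  proof -
    have mp: "0 < 2 * m + 1" using m0 by simp
    have "x mod (2 * m + 1) \<in> {0..<2 * m + 1}" for x :: int using pos_mod_sign[OF mp] pos_mod_bound[OF mp] by simp
    then show ?thesis unfolding WW_def W_def qm by auto
  qed
  have cardW: "card WW \<le> card S" unfolding WW_def W_def using fS by (rule card_image_le)
  have Isub: "{N+1..N+H} \<subseteq> {0..<2 * m + 1}" using NH qm by auto
  define F where "F r = (\<Sum>x\<in>WW. e (of_int (x * (a + r)) / of_int q))" for r
  define D where "D r = (\<Sum>y\<in>{N+1..N+H}. e (of_int (- (r * y)) / of_int q))" for r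
  define A where "A = (\<Sum>s\<in>{s\<in>W q S h k v. N + 1 \<le> s \<and> s \<le> N + H}. e (of_int s * of_int a / of_int q))"
  have setEq: "{s\<in>W q S h k v. N + 1 \<le> s \<and> s \<le> N + H} = WW \<inter> {N+1..N+H}" unfolding WW_def by auto
  have ident: "of_int q * A = (\<Sum>r\<in>{-m..m}. D r * F r)"
    unfolding A_def setEq unfolding D_def F_def qm by (rule identity[OF m0 Wsub Isub])
  have pars: "(\<Sum>r\<in>{-m..m}. (cmod (F r))^2) = of_int q * real (card WW)"
    unfolding F_def qm by (rule parseval[OF m0 Wsub])
  have head: "cmod (F r) \<le> \<epsilon> * \<sigma>" if r: "real_of_int \<bar>r\<bar> \<le> C0" for r
  proof (rule ccontr)
    assume "\<not> cmod (F r) \<le> \<epsilon> * \<sigma>"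
    then have big: "cmod (\<Sum>x\<in>W q S h k v. e (of_int (x * (a + r)) / of_int q)) > \<epsilon> * real (card S)"
      by (simp add: F_def WW_def \<sigma>_def)
    obtain b where b: "\<bar>real_of_int b\<bar> < Q" "q dvd (a + r - 4 * v * b)"
      using large_coeff[OF q S h(1) h(2) v(1) vq hyp big] unfolding Q_def c_def by auto
    define d where "d = a + r - 4 * v * b"
    have vb: "4 * real_of_int v * \<bar>real_of_int b\<bar> < 4 * real_of_int v * Q" using b(1) v(1) by simp
    have absX: "\<bar>4 * real_of_int v * real_of_int b\<bar> = 4 * real_of_int v * \<bar>real_of_int b\<bar>"
      using v(1) by (simp add: abs_mult)
    have "real_of_int d = real_of_int a + real_of_int r - 4 * real_of_int v * real_of_int b" by (simp add: d_def)
    then have "\<bar>real_of_int d\<bar> \<le> \<bar>real_of_int a\<bar> + real_of_int \<bar>r\<bar> + 4 * real_of_int v * \<bar>real_of_int b\<bar>"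
      using absX by arith
    also have "\<dots> < real_of_int q" using a1 r vb VQ5 KC PK Pq by linarith
    finally have "\<bar>d\<bar> < q" by linarith
    have "d = 0"
    proof (rule ccontr)
      assume "d \<noteq> 0"
      then have "\<bar>q\<bar> \<le> \<bar>d\<bar>" using b(2) unfolding d_def[symmetric] by (rule dvd_imp_le_int)
      then show False using \<open>\<bar>d\<bar> < q\<close> by simp
    qed
    then have "a = 4 * v * b - r" unfolding d_def by simp
    then have "real_of_int a = real_of_int (4 * v * b - r)" by simp
    then have "real_of_int a = 4 * real_of_int v * real_of_int b - real_of_int r" by simp
    then have "\<bar>real_of_int a\<bar> \<le> 4 * real_of_int v * \<bar>real_of_int b\<bar> + real_of_int \<bar>r\<bar>"
      using absX by arith
    then have "real_of_int v * Q < C0 + 1/2" using a2 vb r by linarith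
    moreover have "Q \<le> real_of_int v * Q" using v(1) Qpos by simp
    moreover have "K > 0" using C0pos by (simp add: K_def)
    ultimately show False using KC PK QP by linarith
  qed
  have sig: "\<sigma> \<ge> \<rho> * real_of_int q" using card by (simp add: \<sigma>_def)
  have s0: "\<sigma> > 0" using sig rho q0 by (smt (verit) mult_pos_pos of_int_pos)
  define x where "x = \<epsilon> * of_int H / (\<rho> * of_int q)"
  define lam where "lam = x powr (1/3)"
  have xpos: "x > 0" using eps NH rho q0 by (simp add: x_def)
  have lampos: "lam > 0" using xpos by (simp add: lam_def)
  have lam3: "lam^3 = x"
  proof -
    have "lam^3 = lam powr (real 3)" by (rule powr_realpow[OF lampos, symmetric])
    also have "\<dots> = x powr (1/3 * real 3)" by (simp add: lam_def powr_powr)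
    also have "\<dots> = x" using xpos by simp
    finally show ?thesis .
  qed
  have xle: "x \<le> \<epsilon> / \<rho>"
  proof -
    have "real_of_int H \<le> real_of_int q" using NH by simp
    then have "\<epsilon> * of_int H \<le> \<epsilon> * of_int q" using eps by (intro mult_left_mono) auto
    then show ?thesis unfolding x_def using rho q0 by (simp add: field_simps)
  qed
  have lam1: "lam < 1/20"
  proof (rule ccontr)
    assume "\<not> lam < 1/20"
    then have "(1/20)^3 \<le> lam^3" by (intro power_mono) auto
    then have "x \<ge> 1/8000" using lam3 by (simp add: power3_eq_cube)
    moreover have "\<epsilon> / \<rho> < 1/10000" using eps rho by (simp add: field_simps)
    ultimately show False using xle by linarith
  qed
  have HE: "real_of_int H * \<epsilon> = \<rho> * real_of_int q * lam^3"
    unfolding lam3 x_def using rho q0 by (simp add: field_simps)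
  have Afin: "finite {s\<in>W q S h k v. N + 1 \<le> s \<and> s \<le> N + H}" unfolding setEq by simp
  have RHS: "2 * real (card S) * (\<epsilon> * of_int H / (\<rho> * of_int q)) powr (1/3) = 2 * \<sigma> * lam"
    by (simp add: \<sigma>_def lam_def x_def)
  have "cmod A < 2 * \<sigma> * lam"
  proof (cases "lam^2 < 2 * \<epsilon>")
    case True
    have "cmod A \<le> (\<Sum>s\<in>{s\<in>W q S h k v. N + 1 \<le> s \<and> s \<le> N + H}. cmod (e (of_int s * of_int a / of_int q)))"
      unfolding A_def by (rule norm_sum)
    also have "\<dots> = real (card {s\<in>W q S h k v. N + 1 \<le> s \<and> s \<le> N + H})" by simp
    also have "\<dots> \<le> real (card {N+1..N+H})"
      unfolding setEq by (intro of_nat_mono card_mono) auto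
    also have "\<dots> = real_of_int H" using NH by simp
    finally have c1: "cmod A \<le> real_of_int H" .
    have pos: "\<rho> * real_of_int q * lam > 0" using rho q0 lampos by simp
    have "(\<rho> * real_of_int q * lam) * lam^2 < (\<rho> * real_of_int q * lam) * (2 * \<epsilon>)"
      using mult_strict_left_mono[OF True pos] .
    then have "real_of_int H * \<epsilon> < (2 * \<rho> * real_of_int q * lam) * \<epsilon>"
      using HE by (simp add: power2_eq_square power3_eq_cube algebra_simps)
    then have "real_of_int H < 2 * \<rho> * real_of_int q * lam" using eps by simp
    also have "\<dots> \<le> 2 * \<sigma> * lam" using sig lampos by simp
    finally show ?thesis using c1 by linarith
  next
    case False
    then have lam2: "lam^2 \<ge> 2 * \<epsilon>" by simp
    define y where "y = 1 / (3 * \<rho> * lam^2)"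
    have ypos: "y > 0" using rho lampos by (simp add: y_def)
    define R where "R = nat \<lceil>y\<rceil>"
    have R1: "real R \<ge> y" unfolding R_def by (rule real_nat_ceiling_ge)
    have R2: "real R \<le> y + 1"
    proof -
      have "\<lceil>y\<rceil> \<ge> 0" using ypos by simp
      then have "real R = real_of_int \<lceil>y\<rceil>" unfolding R_def by simp
      then show ?thesis by simp
    qed
    have Rge1: "R \<ge> 1" using R1 ypos by (cases R) auto
    have yC: "y \<le> 1 / (6 * \<rho> * \<epsilon>)"
    proof -
      have "3 * \<rho> * (2 * \<epsilon>) \<le> 3 * \<rho> * lam^2" using lam2 rho by simp
      then have "1 / (3 * \<rho> * lam^2) \<le> 1 / (3 * \<rho> * (2 * \<epsilon>))" using rho eps
        by (intro divide_left_mono) (auto intro!: mult_pos_pos)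
      then show ?thesis by (simp add: y_def)
    qed
    have RC: "real R \<le> C0" using R2 yC by (simp add: C0_def)
    define Hd where "Hd = {r\<in>{-m..m}. \<bar>r\<bar> \<le> int R}"
    define Tl where "Tl = {r\<in>{-m..m}. int R < \<bar>r\<bar>}"
    have fHd: "finite Hd" unfolding Hd_def by (rule finite_subset[of _ "{-m..m}"]) auto
    have fTl: "finite Tl" unfolding Tl_def by (rule finite_subset[of _ "{-m..m}"]) auto
    define G where "G r = cmod (D r) * cmod (F r)" for r
    have split: "{-m..m} = Hd \<union> Tl" and disj: "Hd \<inter> Tl = {}" by (auto simp: Hd_def Tl_def)
    have "real_of_int q * cmod A = cmod (of_int q * A)" using q0 by (simp add: norm_mult)
    also have "\<dots> = cmod (\<Sum>r\<in>{-m..m}. D r * F r)" by (simp add: ident)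
    also have "\<dots> \<le> (\<Sum>r\<in>{-m..m}. G r)" unfolding G_def
      by (rule order_trans[OF norm_sum]) (simp add: norm_mult)
    also have "\<dots> = (\<Sum>r\<in>Hd. G r) + (\<Sum>r\<in>Tl. G r)"
      unfolding split by (rule sum.union_disjoint[OF fHd fTl disj])
    finally have qA: "real_of_int q * cmod A \<le> (\<Sum>r\<in>Hd. G r) + (\<Sum>r\<in>Tl. G r)" .
    have X: "(\<Sum>r\<in>Hd. G r) \<le> (2 * real R + 1) * real_of_int H * \<epsilon> * \<sigma>"
    proof -
      have "(\<Sum>r\<in>Hd. G r) \<le> (\<Sum>r\<in>Hd. real_of_int H * (\<epsilon> * \<sigma>))"
      proof (rule sum_mono)
        fix r assume r: "r \<in> Hd"
        have "cmod (D r) \<le> real_of_int H" unfolding D_def using dir_triv NH by simp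
        moreover have "cmod (F r) \<le> \<epsilon> * \<sigma>"
          using r RC by (intro head) (auto simp: Hd_def)
        ultimately show "G r \<le> real_of_int H * (\<epsilon> * \<sigma>)" unfolding G_def
          using NH by (intro mult_mono) auto
      qed
      also have "\<dots> = real (card Hd) * (real_of_int H * (\<epsilon> * \<sigma>))" by simp
      also have "\<dots> \<le> (2 * real R + 1) * (real_of_int H * (\<epsilon> * \<sigma>))"
      proof (rule mult_right_mono)
        have "Hd \<subseteq> {- int R..int R}" by (auto simp: Hd_def)
        then have "card Hd \<le> card {- int R..int R}" by (intro card_mono) auto
        also have "card {- int R..int R} = 2 * R + 1" by simp
        finally show "real (card Hd) \<le> 2 * real R + 1" by simp
      qed (use NH eps s0 in simp)
      finally show ?thesis by (simp add: algebra_simps)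
    qed
    have Y: "(\<Sum>r\<in>Tl. G r) \<le> sqrt (2 * (real_of_int q)^2 / ((361/100) * real R)) * sqrt (real_of_int q * \<sigma>)"
    proof -
      have "(\<Sum>r\<in>Tl. G r) \<le> sqrt (\<Sum>r\<in>Tl. (cmod (D r))^2) * sqrt (\<Sum>r\<in>Tl. (cmod (F r))^2)"
        unfolding G_def by (rule cs_sqrt) auto
      also have "\<dots> \<le> sqrt (2 * (real_of_int q)^2 / ((361/100) * real R)) * sqrt (real_of_int q * \<sigma>)"
      proof (intro mult_mono real_sqrt_le_mono)
        have "(\<Sum>r\<in>Tl. (cmod (D r))^2) \<le> (\<Sum>r\<in>Tl. ((real_of_int q)^2 / (361/100)) * (1 / (of_int r)^2))"
        proof (rule sum_mono)
          fix r assume r: "r \<in> Tl"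
          then have r0: "0 < \<bar>r\<bar>" and r2: "2 * \<bar>r\<bar> \<le> q" using qm by (auto simp: Tl_def)
          have "cmod (D r) \<le> of_int q / (19/10 * of_int \<bar>r\<bar>)" unfolding D_def
            using dir_bound[OF _ r0 r2] NH by simp
          then have "(cmod (D r))^2 \<le> (of_int q / (19/10 * of_int \<bar>r\<bar>))^2"
            by (intro power_mono) auto
          also have "\<dots> = ((real_of_int q)^2 / (361/100)) * (1 / (of_int r)^2)"
            by (simp add: power2_eq_square field_simps)
          finally show "(cmod (D r))^2 \<le> ((real_of_int q)^2 / (361/100)) * (1 / (of_int r)^2)" .
        qed
        also have "\<dots> = ((real_of_int q)^2 / (361/100)) * (\<Sum>r\<in>Tl. 1 / (of_int r)^2)"
          by (simp add: sum_distrib_left)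
        also have "\<dots> \<le> ((real_of_int q)^2 / (361/100)) * (2 / real R)"
          unfolding Tl_def by (intro mult_left_mono inv_sq_tail Rge1) auto
        also have "\<dots> = 2 * (real_of_int q)^2 / ((361/100) * real R)" by simp
        finally show "(\<Sum>r\<in>Tl. (cmod (D r))^2) \<le> 2 * (real_of_int q)^2 / ((361/100) * real R)" .
      next
        have "(\<Sum>r\<in>Tl. (cmod (F r))^2) \<le> (\<Sum>r\<in>{-m..m}. (cmod (F r))^2)"
          by (rule sum_mono2) (auto simp: Tl_def)
        also have "\<dots> = of_int q * real (card WW)" by (rule pars)
        also have "\<dots> \<le> of_int q * \<sigma>" using cardW q0 by (simp add: \<sigma>_def)
        finally show "(\<Sum>r\<in>Tl. (cmod (F r))^2) \<le> real_of_int q * \<sigma>" .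
      qed (auto intro: sum_nonneg)
      finally show ?thesis .
    qed
    have "((\<Sum>r\<in>Hd. G r) + (\<Sum>r\<in>Tl. G r)) / real_of_int q < 2 * \<sigma> * lam"
      by (rule final_arith[OF rho(1) sig _ lampos lam1 HE _ _ X Y rho(2)])
         (use q0 R1 R2 in \<open>simp_all add: y_def\<close>)
    moreover have "cmod A \<le> ((\<Sum>r\<in>Hd. G r) + (\<Sum>r\<in>Tl. G r)) / real_of_int q"
      using qA q0 by (simp add: field_simps)
    ultimately show ?thesis by linarith
  qed
  then show ?thesis unfolding A_def RHS .
qed

theorem lemma4:
  fixes \<rho>\<^sub>1 :: real
  assumes "0 < \<rho>\<^sub>1" "\<rho>\<^sub>1 < 1"
  shows "\<exists>\<epsilon>\<^sub>0. 0 < \<epsilon>\<^sub>0 \<and> \<epsilon>\<^sub>0 < 1 \<and>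
    (\<forall>\<epsilon>::real. 0 < \<epsilon> \<and> \<epsilon> < \<epsilon>\<^sub>0 \<longrightarrow>
      (\<exists>q\<^sub>0::int. \<forall>q::int. prime q \<and> q \<ge> q\<^sub>0 \<longrightarrow>
        (\<forall>S h k v u a N H.
           S \<subseteq> {0..<q} \<and> real (card S) \<ge> \<rho>\<^sub>1 * of_int q \<and>
           1 \<le> h \<and> h \<le> q - 1 \<and>
           (\<forall>b::int. \<bar>real_of_int b\<bar> \<le> real_of_int q / 2 \<and>
              cmod (fT ((\<lambda>s. (h * s) mod q) ` S) (of_int b / of_int q)) > \<epsilon> * real (card S)
              \<longrightarrow> \<bar>of_int b\<bar> < (of_int q) powr (1 - \<rho>\<^sub>1 * \<epsilon>\<^sup>2)) \<and>
           1 \<le> v \<and> of_int v < (of_int q) powr (\<rho>\<^sub>1 * \<epsilon>\<^sup>2 / 4) \<and>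
           5 * of_int v * (of_int q) powr (- \<rho>\<^sub>1 * \<epsilon>\<^sup>2) \<le> \<bar>u::real\<bar> \<and> \<bar>u\<bar> \<le> 1/2 \<and>
           \<bar>u - of_int a / of_int q\<bar> \<le> 1 / (2 * of_int q) \<and>
           0 \<le> N \<and> 1 \<le> H \<and> N + H \<le> q - 1
           \<longrightarrow>
           cmod (\<Sum>s\<in>{s\<in>W q S h k v. N + 1 \<le> s \<and> s \<le> N + H}.
                    e (of_int s * of_int a / of_int q))
             < 2 * real (card S) * (\<epsilon> * of_int H / (\<rho>\<^sub>1 * of_int q)) powr (1/3))))"
proof -
  define \<epsilon>0 where "\<epsilon>0 = \<rho>\<^sub>1 / 10000"
  have e0: "0 < \<epsilon>0" "\<epsilon>0 < 1" using assms by (simp_all add: \<epsilon>0_def)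
  show ?thesis
  proof (intro exI[of _ \<epsilon>0] conjI allI impI e0)
    fix \<epsilon> :: real assume eps: "0 < \<epsilon> \<and> \<epsilon> < \<epsilon>0"
    define c where "c = \<rho>\<^sub>1 * \<epsilon>\<^sup>2"
    define K where "K = 20 + 4 * (1 / (6 * \<rho>\<^sub>1 * \<epsilon>) + 1)"
    define q0 :: int where "q0 = \<lceil>K powr (4 / (3 * c))\<rceil> + 5"
    have c0: "c > 0" using assms eps by (simp add: c_def)
    have Kpos: "K > 0"
    proof -
      have "0 < 1 / (6 * \<rho>\<^sub>1 * \<epsilon>)" using assms eps by simp
      then show ?thesis unfolding K_def by (simp add: add_pos_pos)
    qed
    show "\<exists>q\<^sub>0::int. \<forall>q::int. prime q \<and> q \<ge> q\<^sub>0 \<longrightarrow>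
        (\<forall>S h k v u a N H.
           S \<subseteq> {0..<q} \<and> real (card S) \<ge> \<rho>\<^sub>1 * of_int q \<and>
           1 \<le> h \<and> h \<le> q - 1 \<and>
           (\<forall>b::int. \<bar>real_of_int b\<bar> \<le> real_of_int q / 2 \<and>
              cmod (fT ((\<lambda>s. (h * s) mod q) ` S) (of_int b / of_int q)) > \<epsilon> * real (card S)
              \<longrightarrow> \<bar>of_int b\<bar> < (of_int q) powr (1 - \<rho>\<^sub>1 * \<epsilon>\<^sup>2)) \<and>
           1 \<le> v \<and> of_int v < (of_int q) powr (\<rho>\<^sub>1 * \<epsilon>\<^sup>2 / 4) \<and>
           5 * of_int v * (of_int q) powr (- \<rho>\<^sub>1 * \<epsilon>\<^sup>2) \<le> \<bar>u::real\<bar> \<and> \<bar>u\<bar> \<le> 1/2 \<and>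
           \<bar>u - of_int a / of_int q\<bar> \<le> 1 / (2 * of_int q) \<and>
           0 \<le> N \<and> 1 \<le> H \<and> N + H \<le> q - 1
           \<longrightarrow>
           cmod (\<Sum>s\<in>{s\<in>W q S h k v. N + 1 \<le> s \<and> s \<le> N + H}.
                    e (of_int s * of_int a / of_int q))
             < 2 * real (card S) * (\<epsilon> * of_int H / (\<rho>\<^sub>1 * of_int q)) powr (1/3))"
    proof (rule exI[of _ q0], rule allI, rule impI)
      fix q :: int assume qa: "prime q \<and> q \<ge> q0"
      have "K powr (4 / (3 * c)) \<ge> 0" by simp
      then have "-1 < K powr (4 / (3 * c))" by linarith
      then have "\<lceil>K powr (4 / (3 * c))\<rceil> \<ge> 0" by simp
      then have q5: "q \<ge> 5" using qa unfolding q0_def by linarith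
      have "real_of_int q \<ge> K powr (4 / (3 * c))"
      proof -
        have "K powr (4 / (3 * c)) \<le> real_of_int \<lceil>K powr (4 / (3 * c))\<rceil>" by simp
        also have "\<dots> \<le> real_of_int q" using qa by (simp add: q0_def)
        finally show ?thesis .
      qed
      then have "real_of_int q powr (3 * c / 4) \<ge> (K powr (4 / (3 * c))) powr (3 * c / 4)"
        using c0 by (intro powr_mono2) auto
      also have "(K powr (4 / (3 * c))) powr (3 * c / 4) = K"
        using c0 Kpos by (simp add: powr_powr)
      finally have qK: "real_of_int q powr (3 * (\<rho>\<^sub>1 * \<epsilon>\<^sup>2) / 4) \<ge> 20 + 4 * (1 / (6 * \<rho>\<^sub>1 * \<epsilon>) + 1)"
        by (simp add: c_def K_def)
      have eps': "0 < \<epsilon>" "\<epsilon> < \<rho>\<^sub>1 / 10000" using eps by (simp_all add: \<epsilon>0_def)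
      have qp: "prime q" using qa by simp
      show "\<forall>S h k v u a N H.
           S \<subseteq> {0..<q} \<and> real (card S) \<ge> \<rho>\<^sub>1 * of_int q \<and>
           1 \<le> h \<and> h \<le> q - 1 \<and>
           (\<forall>b::int. \<bar>real_of_int b\<bar> \<le> real_of_int q / 2 \<and>
              cmod (fT ((\<lambda>s. (h * s) mod q) ` S) (of_int b / of_int q)) > \<epsilon> * real (card S)
              \<longrightarrow> \<bar>of_int b\<bar> < (of_int q) powr (1 - \<rho>\<^sub>1 * \<epsilon>\<^sup>2)) \<and>
           1 \<le> v \<and> of_int v < (of_int q) powr (\<rho>\<^sub>1 * \<epsilon>\<^sup>2 / 4) \<and>
           5 * of_int v * (of_int q) powr (- \<rho>\<^sub>1 * \<epsilon>\<^sup>2) \<le> \<bar>u::real\<bar> \<and> \<bar>u\<bar> \<le> 1/2 \<and>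
           \<bar>u - of_int a / of_int q\<bar> \<le> 1 / (2 * of_int q) \<and>
           0 \<le> N \<and> 1 \<le> H \<and> N + H \<le> q - 1
           \<longrightarrow>
           cmod (\<Sum>s\<in>{s\<in>W q S h k v. N + 1 \<le> s \<and> s \<le> N + H}.
                    e (of_int s * of_int a / of_int q))
             < 2 * real (card S) * (\<epsilon> * of_int H / (\<rho>\<^sub>1 * of_int q)) powr (1/3)"
        by (intro allI impI, elim conjE, rule main_core[OF assms eps' qp q5 qK], assumption+)
    qed
  qed
qed

end
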